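(* Let $E$ be a closed formula in which all bound variables are pairwise distinct, and let $x$ be a variable bound in $E$. Let $[\Gamma]_{V(x)}$ be a normal item occurring in (a context of a sequent of) a derivation of $\vdash E$ in LJB, and let $z$ be a free variable of $[\Gamma]_{V(x)}$. Then $x$ is in the scope of $z$.
   Context: Formulas: $A ::= P(t_1,\dots,t_n)\mid A\rightarrow A\mid\forall x\,A$, with first-order terms. A formula is a tree with nodes labelled by atomic formulas, $\rightarrow$, or $\forall x$; positions are node addresses ordered by prefix. In $E$ each bound variable $x$ labels a unique position $\forall x$; a variable $y$ is in the scope of $x$ if the position labelled $\forall x$ is a strict prefix of that labelled $\forall y$. $V(x)$ is the set of variables bound in the subformula $\forall x\,A$ of $E$ at position $\forall x$ (equivalently $x$ together with all variables in the scope of $x$). LJB: an LJB-context is a finite multiset of items; an item is a formula or $[\Gamma]_V$ ($V$ a finite set of variables bound by the bracket, $\Gamma$ an LJB-context); $FV([\Gamma]_V)=FV(\Gamma)\setminus V$. Cleaning rules (anywhere in a context): $[I,\Gamma]_V\longrightarrow I,[\Gamma]_V$ if $FV(I)\cap V=\emptyset$; $[\ ]_V\longrightarrow\emptyset$; $I\,I\longrightarrow I$; an item is normal if no cleaning rule applies inside it; $\Gamma{\downarrow}$ is the normal form for a fixed strategy. LJB rules apply only to LJB-sequents with normal context in which, in each formula, bound variables are distinct and distinct from free variables; formulas are not identified modulo $\alpha$. Rules: (L$\rightarrow$) from $\Gamma'\vdash A_1,\dots,\Gamma'\vdash A_n$ infer $\Gamma\vdash P$, where $\Gamma=\Gamma_1,[\Gamma_2,[\dots\Gamma_{i-1},[\Gamma_i,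 A_1\rightarrow\dots\rightarrow A_n\rightarrow P]_{V_{i-1}}\dots]_{V_2}]_{V_1}$ ($i\ge1$), $\Gamma'=([\dots[[\Gamma_1]_{V_1},\Gamma_2]_{V_2},\dots,\Gamma_{i-1}]_{V_{i-1}},\Gamma_i,A_1\rightarrow\dots\rightarrow A_n\rightarrow P){\downarrow}$, $P$ atomic with no free variable in $V_1\cup\dots\cup V_{i-1}$; (R$\forall$) from $[\Gamma]_V{\downarrow}\vdash A$ infer $\Gamma\vdash\forall x\,A$, $V$ the set of all variables bound in $\forall x\,A$; (R$\rightarrow$) from $(\Gamma,A){\downarrow}\vdash B$ infer $\Gamma\vdash A\rightarrow B$. *)

theory Defs
  imports Main "HOL-Library.Multiset"
begin

type_synonym var = nat

datatype trm = Var var | Fn nat "trm list"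

datatype fm = Atom nat "trm list" | Imp fm fm | All var fm

primrec fvt :: "trm \<Rightarrow> var set" where
  "fvt (Var x) = {x}"
| "fvt (Fn f ts) = \<Union> (set (map fvt ts))"

primrec fv :: "fm \<Rightarrow> var set" where
  "fv (Atom p ts) = \<Union> (set (map fvt ts))"
| "fv (Imp A B) = fv A \<union> fv B"
| "fv (All x A) = fv A - {x}"

primrec bvl :: "fm \<Rightarrow> var list" where
  "bvl (Atom p ts) = []"
| "bvl (Imp A B) = bvl A @ bvl B"
| "bvl (All x A) = x # bvl A"

primrec subfms :: "fm \<Rightarrow> fm set" where
  "subfms (Atom p ts) = {Atom p ts}"
| "subfms (Imp A B) = insert (Imp A B) (subfms A \<union> subfms B)"
| "subfms (All x A) = insert (All x A) (subfms A)"

definition is_atom :: "fm \<Rightarrow> bool" where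
  "is_atom A \<longleftrightarrow> (\<exists>p ts. A = Atom p ts)"

definition Vof :: "fm \<Rightarrow> var \<Rightarrow> var set" where
  "Vof E x = {y. \<exists>A. All x A \<in> subfms E \<and> y \<in> set (bvl (All x A))}"

definition in_scope :: "fm \<Rightarrow> var \<Rightarrow> var \<Rightarrow> bool" where
  "in_scope E x z \<longleftrightarrow> (\<exists>B C. All z B \<in> subfms E \<and> All x C \<in> subfms B)"

datatype item = F fm | Br "item multiset" "var set"

type_synonym ctx = "item multiset"

primrec FVi :: "item \<Rightarrow> var set" where
  "FVi (F A) = fv A"
| "FVi (Br G V) = \<Union> (set_mset (image_mset FVi G)) - V"

primrec fmsi :: "item \<Rightarrow> fm set" where
  "fmsi (F A) = {A}"
| "fmsi (Br G V) = \<Union> (set_mset (image_mset fmsi G))"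

definition fms_ctx :: "ctx \<Rightarrow> fm set" where
  "fms_ctx G = \<Union> (set_mset (image_mset fmsi G))"

inductive clean :: "ctx \<Rightarrow> ctx \<Rightarrow> bool" where
  c_out: "FVi I \<inter> V = {} \<Longrightarrow> clean (add_mset (Br (add_mset I D) V) R) (add_mset I (add_mset (Br D V) R))"
| c_empty: "clean (add_mset (Br {#} V) R) R"
| c_dup: "clean (add_mset I (add_mset I R)) (add_mset I R)"
| c_in: "clean D D' \<Longrightarrow> clean (add_mset (Br D V) R) (add_mset (Br D' V) R)"

definition normal_ctx :: "ctx \<Rightarrow> bool" where
  "normal_ctx G \<longleftrightarrow> \<not> (\<exists>D. clean G D)"

definition normal_item :: "item \<Rightarrow> bool" where
  "normal_item I \<longleftrightarrow> \<not> (\<exists>D. clean {#I#} D)"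

definition nf_strategy :: "(ctx \<Rightarrow> ctx) \<Rightarrow> bool" where
  "nf_strategy nf \<longleftrightarrow> (\<forall>G. clean\<^sup>*\<^sup>* G (nf G) \<and> normal_ctx (nf G))"

definition wf_fm :: "fm \<Rightarrow> bool" where
  "wf_fm A \<longleftrightarrow> distinct (bvl A) \<and> set (bvl A) \<inter> fv A = {}"

type_synonym seq = "ctx \<times> fm"

definition ljb_seq :: "seq \<Rightarrow> bool" where
  "ljb_seq s \<longleftrightarrow> normal_ctx (fst s) \<and> (\<forall>A \<in> fms_ctx (fst s) \<union> {snd s}. wf_fm A)"

text \<open>Gamma_1,[Gamma_2,[...,[Gamma_i, I]_{V_{i-1}}...]_{V_2}]_{V_1}\<close>
fun nest :: "ctx list \<Rightarrow> var set list \<Rightarrow> item \<Rightarrow> ctx" where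
  "nest [G] [] I = add_mset I G"
| "nest (G # Gs) (V # Vs) I = add_mset (Br (nest Gs Vs I) V) G"
| "nest _ _ _ = {#}"

text \<open>[...[[Gamma_1]_{V_1},Gamma_2]_{V_2},...,Gamma_{i-1}]_{V_{i-1}},Gamma_i\<close>
definition unnest :: "ctx list \<Rightarrow> var set list \<Rightarrow> ctx" where
  "unnest Gs Vs = foldl (\<lambda>acc (V, G). add_mset (Br acc V) G) (hd Gs) (zip Vs (tl Gs))"

definition imps :: "fm list \<Rightarrow> fm \<Rightarrow> fm" where
  "imps As P = foldr Imp As P"

inductive ljb_rule :: "(ctx \<Rightarrow> ctx) \<Rightarrow> seq list \<Rightarrow> seq \<Rightarrow> bool" for nf where
  L_imp: "\<lbrakk> length Gs \<ge> 1; length Vs = length Gs - 1; is_atom P;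
            fv P \<inter> \<Union> (set Vs) = {} \<rbrakk> \<Longrightarrow>
          ljb_rule nf
            (map (\<lambda>A. (nf (add_mset (F (imps As P)) (unnest Gs Vs)), A)) As)
            (nest Gs Vs (F (imps As P)), P)"
| R_all: "ljb_rule nf [(nf {#Br G (set (bvl (All x A)))#}, A)] (G, All x A)"
| R_imp: "ljb_rule nf [(nf (add_mset (F A) G), B)] (G, Imp A B)"

datatype 'a dtree = DNode 'a "'a dtree list"

primrec droot :: "'a dtree \<Rightarrow> 'a" where
  "droot (DNode s ts) = s"

primrec nodes :: "'a dtree \<Rightarrow> 'a set" where
  "nodes (DNode s ts) = insert s (\<Union> (set (map nodes ts)))"

inductive valid_deriv :: "(ctx \<Rightarrow> ctx) \<Rightarrow> seq dtree \<Rightarrow> bool" for nf where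
  "\<lbrakk> ljb_seq s; ljb_rule nf (map droot ts) s; \<forall>t \<in> set ts. valid_deriv nf t \<rbrakk>
     \<Longrightarrow> valid_deriv nf (DNode s ts)"

inductive occurs :: "item \<Rightarrow> ctx \<Rightarrow> bool" where
  "I \<in># G \<Longrightarrow> occurs I G"
| "Br D V \<in># G \<Longrightarrow> occurs I D \<Longrightarrow> occurs I G"

end

theory Submission
  imports Defs
begin

lemma subfms_refl: "A \<in> subfms A" by (cases A) auto

lemma subfms_trans: "A \<in> subfms B \<Longrightarrow> B \<in> subfms C \<Longrightarrow> A \<in> subfms C"
  by (induction C) auto

lemma bvl_sub: "A \<in> subfms B \<Longrightarrow> set (bvl A) \<subseteq> set (bvl B)"
  by (induction B) auto

lemma bvl_iff: "w \<in> set (bvl B) \<longleftrightarrow> (\<exists>C. All w C \<in> subfms B)"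
  by (induction B) auto

lemma uniq: "distinct (bvl E) \<Longrightarrow> All w C \<in> subfms E \<Longrightarrow> All w C' \<in> subfms E \<Longrightarrow> C = C'"
proof (induction E)
  case (Atom x1 x2) then show ?case by simp
next
  case (Imp E1 E2)
  show ?case
  proof (cases "All w C \<in> subfms E1")
    case True
    then have "w \<in> set (bvl E1)" using bvl_iff by blast
    then have "w \<notin> set (bvl E2)" using Imp.prems(1) by auto
    then have "All w C' \<notin> subfms E2" using bvl_iff by blast
    then show ?thesis using Imp True by auto
  next
    case False
    then have c: "All w C \<in> subfms E2" using Imp.prems by auto
    then have "w \<in> set (bvl E2)" using bvl_iff by blast
    then have "w \<notin> set (bvl E1)" using Imp.prems(1) by auto
    then have "All w C' \<notin> subfms E1" using bvl_iff by blast
    then show ?thesis using Imp c by auto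
  qed
next
  case (All v E')
  have d: "distinct (bvl E')" "v \<notin> set (bvl E')" using All.prems(1) by auto
  show ?case
  proof (cases "All w C = All v E'")
    case True
    then have "w \<notin> set (bvl E')" using d by auto
    then have "All w C' \<notin> subfms E'" using bvl_iff by blast
    then show ?thesis using All.prems True by auto
  next
    case False
    then have c: "All w C \<in> subfms E'" using All.prems by auto
    then have "w \<in> set (bvl E')" using bvl_iff by blast
    then have "All w C' \<noteq> All v E'" using d by auto
    then show ?thesis using All c d by auto
  qed
qed

lemma Vof_eq: "distinct (bvl E) \<Longrightarrow> All w C \<in> subfms E \<Longrightarrow> Vof E w = set (bvl (All w C))"
  unfolding Vof_def using uniq by blast

lemma laminar: "distinct (bvl E) \<Longrightarrow> X \<in> subfms E \<Longrightarrow> Y \<in> subfms E \<Longrightarrow>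
   set (bvl X) \<inter> set (bvl Y) \<noteq> {} \<Longrightarrow> X \<in> subfms Y \<or> Y \<in> subfms X"
proof (induction E arbitrary: X Y)
  case (Atom x1 x2) then show ?case by auto
next
  case (Imp E1 E2)
  show ?case
  proof (cases "X = Imp E1 E2 \<or> Y = Imp E1 E2")
    case True then show ?thesis using Imp.prems by auto
  next
    case False
    then have x: "X \<in> subfms E1 \<or> X \<in> subfms E2" and y: "Y \<in> subfms E1 \<or> Y \<in> subfms E2"
      using Imp.prems by auto
    have dj: "set (bvl E1) \<inter> set (bvl E2) = {}" using Imp.prems(1) by auto
    show ?thesis using x y
    proof (elim disjE)
      assume "X \<in> subfms E1" "Y \<in> subfms E1" then show ?thesis using Imp by auto
    next
      assume "X \<in> subfms E2" "Y \<in> subfms E2" then show ?thesis using Imp by auto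
    next
      assume "X \<in> subfms E1" "Y \<in> subfms E2"
      then show ?thesis using bvl_sub[of X E1] bvl_sub[of Y E2] dj Imp.prems(4) by blast
    next
      assume "X \<in> subfms E2" "Y \<in> subfms E1"
      then show ?thesis using bvl_sub[of X E2] bvl_sub[of Y E1] dj Imp.prems(4) by blast
    qed
  qed
next
  case (All v E')
  show ?case
  proof (cases "X = All v E' \<or> Y = All v E'")
    case True then show ?thesis using All.prems by auto
  next
    case False
    then show ?thesis using All by auto
  qed
qed

lemma free_bound: "A \<in> subfms E \<Longrightarrow> z \<in> fv A \<Longrightarrow> z \<notin> fv E \<Longrightarrow> z \<in> set (bvl E)"
  by (induction E) auto

lemma comparable: "A \<in> subfms E \<Longrightarrow> y \<in> fv A \<Longrightarrow> z \<in> fv A \<Longrightarrow> y \<notin> fv E \<Longrightarrow> z \<notin> fv E \<Longrightarrow>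
   z \<in> Vof E y \<or> y \<in> Vof E z"
proof (induction E arbitrary: A)
  case (Atom x1 x2) then show ?case by auto
next
  case (Imp E1 E2)
  have "Vof E1 y \<subseteq> Vof (Imp E1 E2) y" "Vof E2 y \<subseteq> Vof (Imp E1 E2) y"
       "Vof E1 z \<subseteq> Vof (Imp E1 E2) z" "Vof E2 z \<subseteq> Vof (Imp E1 E2) z"
    unfolding Vof_def by auto
  moreover have "A \<in> subfms E1 \<or> A \<in> subfms E2" using Imp.prems by auto
  moreover have "y \<notin> fv E1" "y \<notin> fv E2" "z \<notin> fv E1" "z \<notin> fv E2" using Imp.prems by auto
  ultimately show ?case using Imp.IH Imp.prems(2,3) by blast
next
  case (All v E')
  have sub: "Vof E' y \<subseteq> Vof (All v E') y" "Vof E' z \<subseteq> Vof (All v E') z"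
    unfolding Vof_def by auto
  show ?case
  proof (cases "A = All v E'")
    case True then show ?thesis using All.prems by auto
  next
    case False
    then have A: "A \<in> subfms E'" using All.prems by auto
    consider "y \<noteq> v" "z \<noteq> v" | "y = v" "z \<noteq> v" | "y \<noteq> v" "z = v" | "y = v" "z = v" by blast
    then show ?thesis
    proof cases
      case 1 then show ?thesis using All A sub by auto
    next
      case 2
      then have "z \<in> set (bvl E')" using free_bound[OF A] All.prems by auto
      then have "z \<in> Vof (All v E') y" using 2 unfolding Vof_def by auto
      then show ?thesis by auto
    next
      case 3
      then have "y \<in> set (bvl E')" using free_bound[OF A] All.prems by auto
      then have "y \<in> Vof (All v E') z" using 3 unfolding Vof_def by auto
      then show ?thesis by auto
    next
      case 4
      then have "v \<in> Vof (All v E') v" unfolding Vof_def by auto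
      then show ?thesis using 4 by auto
    qed
  qed
qed

lemma Vof_self: "v \<in> Vof E y \<Longrightarrow> v \<in> Vof E v"
proof -
  assume "v \<in> Vof E y"
  then obtain B where "All y B \<in> subfms E" "v \<in> set (bvl (All y B))" unfolding Vof_def by auto
  then obtain C where "All v C \<in> subfms E" using bvl_iff subfms_trans by blast
  then show ?thesis unfolding Vof_def by auto
qed

lemma Vof_ex: "v \<in> Vof E y \<Longrightarrow> \<exists>C. All y C \<in> subfms E"
  unfolding Vof_def by auto

lemma keylemma:
  assumes d: "distinct (bvl E)" and "y \<in> Vof E x" "z \<notin> Vof E x" "a \<in> Vof E y" "a \<in> Vof E z"
  shows "x \<in> Vof E z \<and> x \<noteq> z"
proof -
  obtain Cx where cx: "All x Cx \<in> subfms E" using Vof_ex assms by blast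
  obtain Cy where cy: "All y Cy \<in> subfms E" using Vof_ex assms by blast
  obtain Cz where cz: "All z Cz \<in> subfms E" using Vof_ex assms by blast
  note vx = Vof_eq[OF d cx] and vy = Vof_eq[OF d cy] and vz = Vof_eq[OF d cz]
  have "set (bvl (All y Cy)) \<subseteq> set (bvl (All x Cx))"
  proof -
    have "y \<in> set (bvl (All x Cx))" using assms vx by auto
    then obtain C where c: "All y C \<in> subfms (All x Cx)" using bvl_iff by blast
    then have "All y C \<in> subfms E" using subfms_trans cx by blast
    then have "C = Cy" using uniq d cy by blast
    then show ?thesis using bvl_sub c by blast
  qed
  note yx = this
  have "All z Cz \<in> subfms (All y Cy) \<or> All y Cy \<in> subfms (All z Cz)"
    using laminar[OF d cz cy] assms vy vz by blast
  then show ?thesis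
  proof
    assume "All z Cz \<in> subfms (All y Cy)"
    then have "z \<in> Vof E x" using bvl_sub vx yx by fastforce
    then show ?thesis using assms by blast
  next
    assume "All y Cy \<in> subfms (All z Cz)"
    then have "y \<in> set (bvl (All z Cz))" using bvl_sub by fastforce
    then have "All z Cz \<in> subfms (All x Cx) \<or> All x Cx \<in> subfms (All z Cz)"
      using laminar[OF d cz cx] assms vx by blast
    then show ?thesis
    proof
      assume "All z Cz \<in> subfms (All x Cx)"
      then have "z \<in> Vof E x" using bvl_sub vx by fastforce
      then show ?thesis using assms by blast
    next
      assume "All x Cx \<in> subfms (All z Cz)"
      then have "x \<in> Vof E z" using bvl_sub vz by fastforce
      moreover have "x \<in> Vof E x" using vx by simp
      ultimately show ?thesis using assms by blast
    qed
  qed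
qed

primrec goodi :: "fm \<Rightarrow> item \<Rightarrow> bool" where
  "goodi E (F A) = (A \<in> subfms E)"
| "goodi E (Br G V) = ((\<exists>w C. All w C \<in> subfms E \<and> V = set (bvl (All w C))) \<and> (\<forall>b \<in># image_mset (goodi E) G. b))"

lemma goodi_Br[simp]: "goodi E (Br G V) = ((\<exists>w C. All w C \<in> subfms E \<and> V = set (bvl (All w C))) \<and> (\<forall>I\<in>#G. goodi E I))"
  by auto

declare goodi.simps(2)[simp del]

definition good_ctx :: "fm \<Rightarrow> ctx \<Rightarrow> bool" where
  "good_ctx E G \<longleftrightarrow> (\<forall>I\<in>#G. goodi E I)"

lemma clean_good: "clean G D \<Longrightarrow> good_ctx E G \<Longrightarrow> good_ctx E D"
  by (induction rule: clean.induct) (auto simp: good_ctx_def)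

lemma clean_add: "clean G G' \<Longrightarrow> clean (G + H) (G' + H)"
proof (induction arbitrary: H rule: clean.induct)
  case (c_out I V D R) then show ?case using clean.c_out[of I V D "R + H"] by simp
next
  case (c_empty V R) then show ?case using clean.c_empty[of V "R + H"] by simp
next
  case (c_dup I R) then show ?case using clean.c_dup[of I "R + H"] by simp
next
  case (c_in D D' V R) then show ?case using clean.c_in[of D D' V "R + H"] by simp
qed

lemma nf_good: "nf_strategy nf \<Longrightarrow> good_ctx E G \<Longrightarrow> good_ctx E (nf G)"
proof -
  assume "nf_strategy nf" "good_ctx E G"
  then have "clean\<^sup>*\<^sup>* G (nf G)" unfolding nf_strategy_def by blast
  then show ?thesis using \<open>good_ctx E G\<close>
    by (induction rule: rtranclp_induct) (auto intro: clean_good)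
qed

definition goodV :: "fm \<Rightarrow> var set \<Rightarrow> bool" where
  "goodV E V \<longleftrightarrow> (\<exists>w C. All w C \<in> subfms E \<and> V = set (bvl (All w C)))"

lemma nest_good: "good_ctx E (nest Gs Vs I) \<Longrightarrow> length Vs = length Gs - 1 \<Longrightarrow> Gs \<noteq> [] \<Longrightarrow>
  goodi E I \<and> (\<forall>G\<in>set Gs. good_ctx E G) \<and> (\<forall>V\<in>set Vs. goodV E V)"
proof (induction Gs Vs I rule: nest.induct)
  case (2 G Gs V Vs I)
  have "Gs \<noteq> []" "length Vs = length Gs - 1" using 2(3) by auto
  moreover have "good_ctx E (nest Gs Vs I)" "good_ctx E G" "goodV E V" using 2(2) by (auto simp: good_ctx_def goodV_def)
  ultimately show ?case using 2(1) by auto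
qed (auto simp: good_ctx_def)

lemma foldl_good: "good_ctx E acc \<Longrightarrow> (\<forall>(V,G)\<in>set ps. goodV E V \<and> good_ctx E G) \<Longrightarrow>
  good_ctx E (foldl (\<lambda>acc (V, G). add_mset (Br acc V) G) acc ps)"
proof (induction ps arbitrary: acc)
  case Nil then show ?case by simp
next
  case (Cons p ps)
  obtain V G where p: "p = (V, G)" by (cases p)
  have "good_ctx E (add_mset (Br acc V) G)" using Cons.prems p
    by (auto simp: good_ctx_def goodV_def)
  then show ?case using Cons p by simp
qed

lemma unnest_good: "(\<forall>G\<in>set Gs. good_ctx E G) \<Longrightarrow> (\<forall>V\<in>set Vs. goodV E V) \<Longrightarrow> Gs \<noteq> [] \<Longrightarrow>
  good_ctx E (unnest Gs Vs)"
  unfolding unnest_def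
  apply (rule foldl_good)
   apply (cases Gs; simp)
  apply clarify
  apply (frule set_zip_leftD, drule set_zip_rightD)
  by (metis list.set_sel(2))

lemma imps_sub: "imps As P \<in> subfms E \<Longrightarrow> A \<in> set As \<Longrightarrow> A \<in> subfms E"
proof (induction As)
  case Nil then show ?case by simp
next
  case (Cons a As)
  have "a \<in> subfms (imps (a # As) P)" "imps As P \<in> subfms (imps (a # As) P)"
    by (auto simp: imps_def subfms_refl)
  then show ?case using Cons subfms_trans by auto
qed

lemma rule_good: "ljb_rule nf ps s \<Longrightarrow> nf_strategy nf \<Longrightarrow> good_ctx E (fst s) \<Longrightarrow> snd s \<in> subfms E \<Longrightarrow>
  \<forall>p \<in> set ps. good_ctx E (fst p) \<and> snd p \<in> subfms E"
proof (induction rule: ljb_rule.induct)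
  case (L_imp Gs Vs P As)
  have ne: "Gs \<noteq> []" using L_imp by auto
  have n: "goodi E (F (imps As P)) \<and> (\<forall>G\<in>set Gs. good_ctx E G) \<and> (\<forall>V\<in>set Vs. goodV E V)"
    using nest_good[of E Gs Vs "F (imps As P)"] L_imp ne by auto
  then have "good_ctx E (unnest Gs Vs)" using unnest_good ne by blast
  then have "good_ctx E (add_mset (F (imps As P)) (unnest Gs Vs))" using n by (simp add: good_ctx_def)
  then have "good_ctx E (nf (add_mset (F (imps As P)) (unnest Gs Vs)))" using nf_good L_imp by blast
  then show ?case using imps_sub n by auto
next
  case (R_all G x A)
  have "A \<in> subfms E" using R_all subfms_trans[of A "All x A" E] subfms_refl by auto
  moreover have "good_ctx E {#Br G (set (bvl (All x A)))#}" using R_all by (auto simp: good_ctx_def)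
  ultimately show ?case using nf_good R_all by auto
next
  case (R_imp A G B)
  have "A \<in> subfms E" "B \<in> subfms E" using R_imp subfms_trans[of _ "Imp A B" E] subfms_refl by auto
  moreover have "good_ctx E (add_mset (F A) G)" using R_imp \<open>A \<in> subfms E\<close> by (auto simp: good_ctx_def)
  ultimately show ?case using nf_good R_imp by auto
qed

lemma tree_good: "valid_deriv nf t \<Longrightarrow> nf_strategy nf \<Longrightarrow> good_ctx E (fst (droot t)) \<Longrightarrow> snd (droot t) \<in> subfms E \<Longrightarrow>
  \<forall>s \<in> nodes t. good_ctx E (fst s)"
proof (induction rule: valid_deriv.induct)
  case (1 s ts)
  have "\<forall>p \<in> set (map droot ts). good_ctx E (fst p) \<and> snd p \<in> subfms E"
    using rule_good[OF 1(2)] 1 by auto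
  then show ?case using 1 by auto
qed

lemma occurs_good: "occurs I G \<Longrightarrow> good_ctx E G \<Longrightarrow> goodi E I"
  by (induction rule: occurs.induct) (auto simp: good_ctx_def)

lemma NL1: "normal_item (Br D W) \<Longrightarrow> I \<in># D \<Longrightarrow> FVi I \<inter> W \<noteq> {}"
proof
  assume n: "normal_item (Br D W)" and i: "I \<in># D" and e: "FVi I \<inter> W = {}"
  obtain D0 where "D = add_mset I D0" using i by (metis mset_add)
  then have "clean {#Br D W#} (add_mset I {#Br D0 W#})" using clean.c_out[OF e, of D0 "{#}"] by simp
  then show False using n unfolding normal_item_def by blast
qed

lemma NL2: "normal_item (Br D W) \<Longrightarrow> Br D' W' \<in># D \<Longrightarrow> normal_item (Br D' W')"
proof -
  assume n: "normal_item (Br D W)" and i: "Br D' W' \<in># D"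
  show ?thesis unfolding normal_item_def
  proof
    assume "\<exists>X. clean {#Br D' W'#} X"
    then obtain X where "clean {#Br D' W'#} X" by blast
    then have "clean ({#Br D' W'#} + (D - {#Br D' W'#})) (X + (D - {#Br D' W'#}))" by (rule clean_add)
    then have "clean D (X + (D - {#Br D' W'#}))" using i by simp
    then have "clean {#Br D W#} {#Br (X + (D - {#Br D' W'#})) W#}" using clean.c_in[of D _ W "{#}"] by simp
    then show False using n unfolding normal_item_def by blast
  qed
qed

lemma mainlemma:
  assumes fe: "fv E = {}" and d: "distinct (bvl E)"
  shows "goodi E I \<Longrightarrow> normal_item I \<Longrightarrow> I = Br D W \<Longrightarrow> W = Vof E w \<Longrightarrow> (\<exists>C. All w C \<in> subfms E) \<Longrightarrow>
    u \<in> FVi I \<Longrightarrow> w \<in> Vof E u \<and> w \<noteq> u"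
proof (induction I arbitrary: D W w u)
  case (F x) then show ?case by simp
next
  case (Br D0 W0)
  have eq: "D0 = D" "W0 = W" using Br.prems by auto
  obtain I where I: "I \<in># D" "u \<in> FVi I" and uW: "u \<notin> W" using Br.prems eq by auto
  obtain y where y: "y \<in> FVi I" "y \<in> W" using NL1 Br.prems eq I by blast
  have wx: "w \<in> Vof E w" using Br.prems unfolding Vof_def by auto
  have gI: "goodi E I" using Br.prems eq I by auto
  show ?case
  proof (cases I)
    case (F A)
    have A: "A \<in> subfms E" using gI F by simp
    have "u \<in> Vof E y \<or> y \<in> Vof E u" using comparable[OF A] y I F fe by auto
    then obtain a where "a \<in> Vof E y" "a \<in> Vof E u" using Vof_self by blast
    then show ?thesis using keylemma[OF d, of y w u a] y uW Br.prems by auto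
  next
    case (Br D' W')
    obtain w' C' where w': "All w' C' \<in> subfms E" "W' = set (bvl (All w' C'))" using gI Br by auto
    have "W' = Vof E w'" using Vof_eq[OF d w'(1)] w' by simp
    moreover have "normal_item I" using NL2 Br.prems eq I Br by blast
    ultimately have ih: "\<And>v. v \<in> FVi I \<Longrightarrow> w' \<in> Vof E v \<and> w' \<noteq> v"
      using Br.IH[of I D' W' w'] I eq gI Br w'(1) by blast
    then show ?thesis using keylemma[OF d, of y w u w'] y uW Br.prems I by auto
  qed
qed

theorem proposition11:
  fixes nf :: "ctx \<Rightarrow> ctx" and E :: fm and x z :: var and G :: ctx
    and t :: "seq dtree" and s :: seq
  assumes "nf_strategy nf"
    and "fv E = {}"
    and "distinct (bvl E)"
    and "\<exists>A. All x A \<in> subfms E"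
    and "valid_deriv nf t"
    and "droot t = ({#}, E)"
    and "s \<in> nodes t"
    and "occurs (Br G (Vof E x)) (fst s)"
    and "normal_item (Br G (Vof E x))"
    and "z \<in> FVi (Br G (Vof E x))"
  shows "in_scope E x z"
proof -
  have "good_ctx E (fst s)" using tree_good[OF assms(5,1)] assms(6,7) subfms_refl
    by (auto simp: good_ctx_def)
  then have "goodi E (Br G (Vof E x))" using occurs_good assms(8) by blast
  then have r: "x \<in> Vof E z \<and> x \<noteq> z" using mainlemma[OF assms(2,3)] assms(4,9,10) by blast
  then obtain B where B: "All z B \<in> subfms E" "x \<in> set (bvl (All z B))" unfolding Vof_def by auto
  then have "x \<in> set (bvl B)" using r by auto
  then obtain C where "All x C \<in> subfms B" using bvl_iff by blast
  then show ?thesis unfolding in_scope_def using B by blast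
qed

end
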